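(* Let $h(x)$ and $h'(x)$ be scattered polynomials in $\mathbb{F}_{q^n}[x]$ in standard form, both $\mathrm{GL}$-equivalent to a scattered polynomial $f(x)$. Then there exist $a,b\in\mathbb{F}_{q^n}^*$ such that $h'(x)=ah(bx)$ for all $x$, or $h'(x)=ah^{-1}(bx)$ for all $x$.
   Context: $q$ is a prime power, $n>1$. A $q$-polynomial $h(x)=\sum_{i=0}^{n-1}b_ix^{q^i}\in\mathbb{F}_{q^n}[x]$ is scattered if for all $y,z\in\mathbb{F}_{q^n}$, $zh(y)-yh(z)=0$ implies $y,z$ are $\mathbb{F}_q$-linearly dependent. $U_h=\{(x,h(x))\colon x\in\mathbb{F}_{q^n}\}$; two $q$-polynomials $f,g$ are $\mathrm{GL}$-equivalent if $U_fA=U_g$ for some $A\in\mathrm{GL}(2,q^n)$, where $A$ acts on row vectors by right multiplication. With $\Delta_h=\{(i-j)\bmod n\colon b_ib_j\neq0,\ i\neq j\}\cup\{n\}$ and $t_h=\gcd(\Delta_h)$, $h$ is in standard form if $t_h>1$. A scattered polynomial in standard form is a bijection of $\mathbb{F}_{q^n}$, and $h^{-1}$ denotes its inverse map (itself an $\mathbb{F}_q$-linear map of $\mathbb{F}_{q^n}$). *)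

theory Defs
  imports "HOL-Computational_Algebra.Primes" "HOL-Library.Cardinality"
begin

definition prime_power :: "nat \<Rightarrow> bool" where
  "prime_power q \<longleftrightarrow> (\<exists>p k. prime p \<and> k > 0 \<and> q = p ^ k)"

definition subfield_Fq :: "nat \<Rightarrow> 'a::field set" where
  "subfield_Fq q = {x. x ^ q = x}"

definition qpoly_eval :: "nat \<Rightarrow> nat \<Rightarrow> (nat \<Rightarrow> 'a::field) \<Rightarrow> 'a \<Rightarrow> 'a" where
  "qpoly_eval q n b x = (\<Sum>i<n. b i * x ^ (q ^ i))"

definition Fq_lin_dep :: "nat \<Rightarrow> 'a::field \<Rightarrow> 'a \<Rightarrow> bool" where
  "Fq_lin_dep q y z \<longleftrightarrow>
     (\<exists>l m. l \<in> subfield_Fq q \<and> m \<in> subfield_Fq q \<and> (l \<noteq> 0 \<or> m \<noteq> 0) \<and> l * y + m * z = 0)"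

definition scattered :: "nat \<Rightarrow> nat \<Rightarrow> (nat \<Rightarrow> 'a::field) \<Rightarrow> bool" where
  "scattered q n b \<longleftrightarrow>
     (\<forall>y z. z * qpoly_eval q n b y - y * qpoly_eval q n b z = 0 \<longrightarrow> Fq_lin_dep q y z)"

definition U_set :: "nat \<Rightarrow> nat \<Rightarrow> (nat \<Rightarrow> 'a::field) \<Rightarrow> ('a \<times> 'a) set" where
  "U_set q n b = {(x, qpoly_eval q n b x) | x. True}"

text \<open>Right multiplication of row vector (u,v) by the matrix [[a,b],[c,d]].\<close>
definition mat_act :: "'a::field \<times> 'a \<times> 'a \<times> 'a \<Rightarrow> 'a \<times> 'a \<Rightarrow> 'a \<times> 'a" where
  "mat_act M uv = (case M of (a, b, c, d) \<Rightarrow> case uv of (u, v) \<Rightarrow> (u * a + v * c, u * b + v * d))"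

definition GL_equiv :: "nat \<Rightarrow> nat \<Rightarrow> (nat \<Rightarrow> 'a::field) \<Rightarrow> (nat \<Rightarrow> 'a) \<Rightarrow> bool" where
  "GL_equiv q n f g \<longleftrightarrow>
     (\<exists>a b c d. a * d - b * c \<noteq> 0 \<and> mat_act (a, b, c, d) ` U_set q n f = U_set q n g)"

definition Delta :: "nat \<Rightarrow> (nat \<Rightarrow> 'a::field) \<Rightarrow> nat set" where
  "Delta n b = {(i + n - j) mod n | i j. i < n \<and> j < n \<and> i \<noteq> j \<and> b i * b j \<noteq> 0} \<union> {n}"

definition t_idx :: "nat \<Rightarrow> (nat \<Rightarrow> 'a::field) \<Rightarrow> nat" where
  "t_idx n b = Gcd (Delta n b)"

definition standard_form :: "nat \<Rightarrow> (nat \<Rightarrow> 'a::field) \<Rightarrow> bool" where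
  "standard_form n b \<longleftrightarrow> t_idx n b > 1"

end

theory Submission
  imports Defs "HOL-Algebra.Multiplicative_Group" "HOL-Number_Theory.Residues"
begin

definition ring_of_ty :: "'a::field ring" where
 "ring_of_ty = \<lparr>carrier = UNIV, monoid.mult = (\<lambda>x y. x * y), one = 1, ring.zero = 0, add = (\<lambda>x y. x + y)\<rparr>"

lemma field_ring_of_ty: "field (ring_of_ty :: 'a::field ring)"
proof -
  have "\<exists>y. x + y = 0" for x :: 'a
    using add.right_inverse by blast
  moreover have "x \<noteq> 0 \<Longrightarrow> \<exists>y. x * y = 1" for x :: 'a
    by (rule exI[of _ "inverse x"]) auto
  ultimately show ?thesis
    unfolding ring_of_ty_def using add.right_inverse
    by unfold_locales (auto simp:algebra_simps Units_def)
qed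

lemma pow_ring_of_ty: "x [^]\<^bsub>ring_of_ty\<^esub> (m::nat) = (x::'a::field) ^ m"
  by (induct m) (simp_all add: ring_of_ty_def nat_pow_def)

lemma gen_exists:
  "\<exists>g::'a::{finite,field}. g \<noteq> 0 \<and> (\<forall>x. x \<noteq> 0 \<longrightarrow> (\<exists>i. x = g ^ i))"
proof -
  interpret F: field "ring_of_ty :: 'a ring" by (rule field_ring_of_ty)
  have "finite (carrier (ring_of_ty :: 'a ring))" by (simp add: ring_of_ty_def)
  from F.finite_field_mult_group_has_gen[OF this] obtain a where
    a: "a \<in> carrier (mult_of (ring_of_ty :: 'a ring))"
    and c: "carrier (mult_of (ring_of_ty :: 'a ring)) = {a [^]\<^bsub>ring_of_ty\<^esub> i | i::nat. i \<in> UNIV}"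
    by blast
  have a0: "a \<noteq> 0" using a by (simp add: ring_of_ty_def)
  show ?thesis
  proof (intro exI[of _ a] conjI allI impI)
    fix x :: 'a assume "x \<noteq> 0"
    hence "x \<in> carrier (mult_of (ring_of_ty :: 'a ring))" by (simp add: ring_of_ty_def)
    with c show "\<exists>i. x = a ^ i" by (auto simp: pow_ring_of_ty)
  qed (rule a0)
qed

lemma NT1:
  fixes q t m :: nat
  assumes q2: "q \<ge> 2" and t0: "t > 0" and dv: "(q^t - 1) dvd (q^m - 1)"
  shows "t dvd m"
proof -
  define P where "P = q^t - 1"
  define r where "r = m mod t"
  define a where "a = m div t"
  have m: "m = t * a + r" unfolding a_def r_def by simp
  have rt: "r < t" unfolding r_def using t0 by simp
  have q1: "q^t \<ge> 1" "q^r \<ge> 1" "q^m \<ge> 1" using q2 by simp_all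
  have "[q^t = 1] (mod P)" unfolding P_def using q1 by (simp add: cong_altdef_nat)
  hence "[(q^t)^a = 1^a] (mod P)" by (rule cong_pow)
  hence "[q^(t*a) * q^r = 1 * q^r] (mod P)" by (intro cong_mult) (auto simp: power_mult)
  hence c1: "[q^m = q^r] (mod P)" by (simp add: m power_add)
  have "[q^m = 1] (mod P)" using dv q1 unfolding P_def by (simp add: cong_altdef_nat)
  hence "[q^r = 1] (mod P)" using c1 by (meson cong_sym cong_trans)
  hence "P dvd q^r - 1" using q1 by (simp add: cong_altdef_nat)
  moreover have "q^r < q^t" using rt q2 by (simp add: power_strict_increasing)
  ultimately have "q^r - 1 = 0" unfolding P_def
  proof -
    assume d: "q ^ t - 1 dvd q ^ r - 1" and l: "q^r < q^t"
    show ?thesis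
    proof (rule ccontr)
      assume "q^r - 1 \<noteq> 0"
      hence "q^t - 1 \<le> q^r - 1" using d by (intro dvd_imp_le) auto
      thus False using l q1 by linarith
    qed
  qed
  hence "q^r = 1" using q1 by simp
  hence "r = 0" using q2 by (simp add: power_eq_1_iff)
  thus ?thesis using m by simp
qed

lemma pow_sub1_dvd:
  fixes q d n :: nat
  assumes "q \<ge> 1" "d dvd n"
  shows "(q^d - 1) dvd (q^n - 1)"
proof -
  obtain a where n: "n = d * a" using assms by auto
  have q1: "q^d \<ge> 1" "q^n \<ge> 1" using assms by simp_all
  have "[q^d = 1] (mod (q^d - 1))" using q1 by (simp add: cong_altdef_nat)
  hence "[(q^d)^a = 1^a] (mod (q^d - 1))" by (rule cong_pow)
  hence "[q^n = 1] (mod (q^d - 1))" by (simp add: n power_mult)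
  thus ?thesis using q1 by (simp add: cong_altdef_nat)
qed

locale ffield =
  fixes q n :: nat and ty :: "'a::{finite,field} itself"
  assumes pp: "prime_power q" and n1: "n > 1" and cardF: "CARD('a) = q ^ n"
begin

lemma q_ge2: "q \<ge> 2"
proof -
  obtain p k where pk: "prime p" "k > 0" "q = p ^ k" using pp unfolding prime_power_def by blast
  have "p \<ge> 2" using pk(1) by (simp add: prime_ge_2_nat)
  moreover have "p ^ k \<ge> p" using pk(2) \<open>p \<ge> 2\<close> by (simp add: self_le_power)
  ultimately show ?thesis using pk(3) by simp
qed

lemma char_q: "\<exists>j. prime CHAR('a) \<and> q = CHAR('a) ^ j"
proof -
  obtain r j where r: "prime r" "j > 0" "q = r ^ j" using pp unfolding prime_power_def by blast
  have cp: "CHAR('a) > 0" by (rule finite_imp_CHAR_pos) simp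
  hence pc: "prime CHAR('a)" by (rule prime_CHAR_semidom)
  have "CHAR('a) dvd card (UNIV :: 'a set)" by (rule CHAR_dvd_CARD)
  hence "CHAR('a) dvd r ^ (j * n)" using cardF r by (simp add: power_mult)
  hence "CHAR('a) dvd r" using pc prime_dvd_power by blast
  hence "CHAR('a) = r" using pc r(1) by (simp add: primes_dvd_imp_eq)
  thus ?thesis using r pc by blast
qed

lemma frob_add: "((x::'a) + y) ^ (q ^ i) = x ^ (q ^ i) + y ^ (q ^ i)"
proof -
  obtain j where j: "prime CHAR('a)" "q = CHAR('a) ^ j" using char_q by blast
  show ?thesis using freshmans_dream'[OF j(1), of "q^i" "j*i" x y] j(2) by (simp add: power_mult)
qed

lemma frob_sum: "(sum f A :: 'a) ^ (q ^ i) = (\<Sum>x\<in>A. f x ^ (q ^ i))"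
proof -
  obtain j where j: "prime CHAR('a)" "q = CHAR('a) ^ j" using char_q by blast
  show ?thesis using freshmans_dream_sum'[OF j(1), of "q^i" "j*i" f A] j(2) by (simp add: power_mult)
qed

lemma frob_neg: "(- (x::'a)) ^ (q ^ i) = - (x ^ (q ^ i))"
proof -
  have "(x + - x) ^ (q ^ i) = x ^ (q ^ i) + (- x) ^ (q ^ i)" by (rule frob_add)
  moreover have "q ^ i > 0" using q_ge2 by simp
  ultimately have "0 = x ^ (q ^ i) + (- x) ^ (q ^ i)" by (simp add: zero_power)
  thus ?thesis by (simp add: eq_neg_iff_add_eq_0 add.commute)
qed

lemma frob_diff: "((x::'a) - y) ^ (q ^ i) = x ^ (q ^ i) - y ^ (q ^ i)"
  using frob_add[of x "- y" i] frob_neg[of y i] by simp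

lemma pow_Q: "(x::'a) ^ (q ^ n) = x"
proof (cases "x = 0")
  case False
  have "x * (\<Prod>y\<in>UNIV-{0}. x * y) = x * x ^ (card (UNIV :: 'a set) - 1) * \<Prod>(UNIV-{0})"
    by (simp add: prod.distrib mult_ac)
  also have "x * x ^ (card (UNIV :: 'a set) - 1) = x ^ Suc (card (UNIV :: 'a set) - 1)"
    by (subst power_Suc) auto
  also have "Suc (card (UNIV :: 'a set) - 1) = card (UNIV :: 'a set)"
    using finite_UNIV_card_ge_0[where ?'a = 'a] by simp
  also have "(\<Prod>y\<in>UNIV-{0}. x * y) = (\<Prod>y\<in>UNIV-{0}. y)"
    by (rule prod.reindex_bij_witness[of _ "\<lambda>y. y / x" "\<lambda>y. x * y"]) (use False in auto)
  finally show ?thesis using cardF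
    by simp
qed (use n1 q_ge2 in auto)

lemma Qpos: "q ^ n \<ge> 4"
proof -
  have "q ^ n \<ge> q ^ 2" using q_ge2 n1 by (intro power_increasing) auto
  moreover have "q ^ 2 \<ge> 2 ^ 2" using q_ge2 by (intro power_mono) auto
  ultimately show ?thesis by simp
qed

lemma pow_Q1: "(x::'a) \<noteq> 0 \<Longrightarrow> x ^ (q ^ n - 1) = 1"
proof -
  assume x: "x \<noteq> 0"
  have "x * x ^ (q ^ n - 1) = x ^ Suc (q ^ n - 1)" by simp
  also have "Suc (q ^ n - 1) = q ^ n" using Qpos by simp
  finally have "x * x ^ (q ^ n - 1) = x * 1" using pow_Q by simp
  thus ?thesis using x by simp
qed

lemma pow_mod_order: "(w::'a) ^ m = 1 \<Longrightarrow> w ^ j = w ^ (j mod m)"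
proof -
  assume w: "w ^ m = 1"
  have "w ^ j = w ^ (m * (j div m) + j mod m)" by simp
  also have "\<dots> = (w ^ m) ^ (j div m) * w ^ (j mod m)" by (simp only: power_add power_mult)
  finally show ?thesis using w by simp
qed

end

context ffield
begin

definition gen :: 'a where
  "gen = (SOME g. g \<noteq> 0 \<and> (\<forall>x. x \<noteq> 0 \<longrightarrow> (\<exists>i. x = g ^ i)))"

lemma gen_prop: "gen \<noteq> 0" "x \<noteq> 0 \<Longrightarrow> \<exists>i. x = gen ^ i"
proof -
  have "\<exists>g::'a. g \<noteq> 0 \<and> (\<forall>x. x \<noteq> 0 \<longrightarrow> (\<exists>i. x = g ^ i))" by (rule gen_exists)
  hence *: "gen \<noteq> 0 \<and> (\<forall>x. x \<noteq> 0 \<longrightarrow> (\<exists>i. x = gen ^ i))"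
    unfolding gen_def by (rule someI_ex)
  show "gen \<noteq> 0" using * by blast
  show "x \<noteq> 0 \<Longrightarrow> \<exists>i. x = gen ^ i" using * by blast
qed

lemma card_nonzero: "card (UNIV - {0::'a}) = q ^ n - 1"
  using cardF by (simp add: card_Diff_singleton)

lemma gen_ord: "gen ^ m = 1 \<longleftrightarrow> (q ^ n - 1) dvd m"
proof
  assume "(q ^ n - 1) dvd m"
  then obtain c where "m = (q ^ n - 1) * c" by auto
  hence "gen ^ m = (gen ^ (q ^ n - 1)) ^ c" by (simp add: power_mult)
  thus "gen ^ m = 1" using pow_Q1[OF gen_prop(1)] by simp
next
  assume gm: "gen ^ m = 1"
  define r where "r = m mod (q ^ n - 1)"
  have "gen ^ m = gen ^ r" unfolding r_def by (rule pow_mod_order[OF pow_Q1[OF gen_prop(1)]])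
  hence gr: "gen ^ r = 1" using gm by simp
  have Q1: "q ^ n - 1 > 0" using Qpos by simp
  have rlt: "r < q ^ n - 1" unfolding r_def using Q1 by simp
  show "(q ^ n - 1) dvd m"
  proof (rule ccontr)
    assume "\<not> (q ^ n - 1) dvd m"
    hence r0: "r > 0" unfolding r_def by (simp add: dvd_eq_mod_eq_0)
    have "UNIV - {0::'a} \<subseteq> (\<lambda>i. gen ^ i) ` {..<r}"
    proof
      fix x :: 'a assume "x \<in> UNIV - {0}"
      then obtain i where "x = gen ^ i" using gen_prop(2) by blast
      hence "x = gen ^ (i mod r)" using pow_mod_order[OF gr] by simp
      moreover have "i mod r < r" using r0 by simp
      ultimately show "x \<in> (\<lambda>i. gen ^ i) ` {..<r}" by blast
    qed
    hence "card (UNIV - {0::'a}) \<le> card ((\<lambda>i. gen ^ i) ` {..<r})" by (intro card_mono) auto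
    also have "\<dots> \<le> r" using card_image_le[of "{..<r}" "\<lambda>i. gen ^ i"] by simp
    finally show False using card_nonzero rlt by simp
  qed
qed

lemma pow_cancel1: "(w::'a) \<noteq> 0 \<Longrightarrow> w ^ m = w \<Longrightarrow> m \<ge> 1 \<Longrightarrow> w ^ (m - 1) = 1"
proof -
  assume w: "w \<noteq> 0" "w ^ m = w" "m \<ge> 1"
  have "w * w ^ (m - 1) = w ^ Suc (m - 1)" by simp
  also have "Suc (m - 1) = m" using w(3) by simp
  finally have "w * w ^ (m - 1) = w * 1" using w(2) by simp
  thus ?thesis using w(1) by simp
qed

lemma pow_fix1: "(w::'a) ^ (m - 1) = 1 \<Longrightarrow> m \<ge> 1 \<Longrightarrow> w ^ m = w"
proof -
  assume w: "w ^ (m - 1) = 1" "m \<ge> 1"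
  have "w ^ m = w ^ Suc (m - 1)" using w(2) by simp
  also have "\<dots> = w" using w(1) by simp
  finally show ?thesis .
qed

lemma FixAll:
  assumes td: "t dvd n" and t0: "0 < t" and fx: "\<forall>x::'a. x ^ (q ^ t) = x \<longrightarrow> x ^ (q ^ m) = x"
  shows "t dvd m"
proof -
  define P where "P = q ^ t - 1"
  have q2: "q \<ge> 2" by (rule q_ge2)
  have P0: "P > 0" unfolding P_def using q2 t0 by (metis Suc_1 Suc_le_lessD one_less_power zero_less_diff)
  have "P dvd q ^ n - 1" unfolding P_def using td q2 by (intro pow_sub1_dvd) auto
  then obtain e where eP: "q ^ n - 1 = P * e" by auto
  have e0: "e > 0" using eP Qpos by (cases e) auto
  define w where "w = gen ^ e"
  have w0: "w \<noteq> 0" unfolding w_def using gen_prop(1) by simp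
  have "w ^ (q ^ t - 1) = gen ^ (e * P)" unfolding w_def P_def by (simp add: power_mult)
  also have "\<dots> = 1" unfolding gen_ord using eP by (simp add: mult.commute)
  finally have "w ^ (q ^ t - 1) = 1" .
  hence "w ^ (q ^ t) = w" by (rule pow_fix1) (use q2 in simp)
  hence "w ^ (q ^ m) = w" using fx by blast
  hence "w ^ (q ^ m - 1) = 1" using w0 q2 by (intro pow_cancel1) auto
  hence "gen ^ (e * (q ^ m - 1)) = 1" unfolding w_def by (simp add: power_mult)
  hence "(q ^ n - 1) dvd e * (q ^ m - 1)" unfolding gen_ord .
  hence "P * e dvd (q ^ m - 1) * e" by (simp only: eP mult.commute)
  hence "P dvd q ^ m - 1" using e0 by simp
  thus ?thesis using NT1[OF q2 t0] unfolding P_def by blast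
qed

lemma G1:
  assumes "d dvd n" "d \<ge> 2"
  shows "\<exists>l::'a. l ^ (q ^ d) = l \<and> l ^ q \<noteq> l"
proof (rule ccontr)
  assume "\<not> ?thesis"
  hence "\<forall>x::'a. x ^ (q ^ d) = x \<longrightarrow> x ^ (q ^ 1) = x" by auto
  moreover have "0 < d" using assms by simp
  ultimately have "d dvd 1" using FixAll[OF assms(1)] by blast
  thus False using assms by simp
qed

end

context ffield
begin

abbreviation FF :: "'a set" where "FF \<equiv> subfield_Fq q"

lemma FF_iff: "x \<in> FF \<longleftrightarrow> x ^ q = x" by (simp add: subfield_Fq_def)

lemma frob_add1: "((x::'a) + y) ^ q = x ^ q + y ^ q" using frob_add[of x y 1] by simp
lemma frob_neg1: "(- (x::'a)) ^ q = - (x ^ q)" using frob_neg[of x 1] by simp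

lemma FF_pow: "x \<in> FF \<Longrightarrow> x ^ (q ^ i) = x"
proof (induct i)
  case (Suc i)
  have "q ^ Suc i = q ^ i * q" by simp
  hence "x ^ (q ^ Suc i) = (x ^ (q ^ i)) ^ q" by (simp only: power_mult)
  thus ?case using Suc by (simp add: FF_iff)
qed simp

lemma FF_0: "0 \<in> FF" using q_ge2 by (simp add: FF_iff zero_power)
lemma FF_1: "1 \<in> FF" by (simp add: FF_iff)
lemma FF_add: "x \<in> FF \<Longrightarrow> y \<in> FF \<Longrightarrow> x + y \<in> FF" by (simp add: FF_iff frob_add1)
lemma FF_neg: "x \<in> FF \<Longrightarrow> - x \<in> FF" by (simp add: FF_iff frob_neg1)
lemma FF_mult: "x \<in> FF \<Longrightarrow> y \<in> FF \<Longrightarrow> x * y \<in> FF" by (simp add: FF_iff power_mult_distrib)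
lemma FF_div: "x \<in> FF \<Longrightarrow> y \<in> FF \<Longrightarrow> x / y \<in> FF" by (simp add: FF_iff power_divide)

lemma dep_mult:
  assumes "Fq_lin_dep q y z" "z \<noteq> 0"
  shows "\<exists>r\<in>FF. y = r * z"
proof -
  obtain l m where lm: "l \<in> FF" "m \<in> FF" "l \<noteq> 0 \<or> m \<noteq> 0" "l * y + m * z = 0"
    using assms(1) unfolding Fq_lin_dep_def by blast
  have l0: "l \<noteq> 0" using lm assms(2) by auto
  have "y = (- m / l) * z" using lm(4) l0 by (simp add: field_simps eq_neg_iff_add_eq_0)
  moreover have "- m / l \<in> FF" using lm by (intro FF_div FF_neg)
  ultimately show ?thesis by blast
qed

lemma FF_nonzero_form:
  assumes "x \<in> FF" "x \<noteq> 0"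
  shows "\<exists>c. x = gen ^ (((q ^ n - 1) div (q - 1)) * c)"
proof -
  have q2: "q \<ge> 2" by (rule q_ge2)
  have "(q ^ 1 - 1) dvd (q ^ n - 1)" using q2 by (intro pow_sub1_dvd) auto
  then obtain e where eP: "q ^ n - 1 = (q - 1) * e" by auto
  have ediv: "(q ^ n - 1) div (q - 1) = e" using eP q2 by simp
  obtain i where i: "x = gen ^ i" using gen_prop(2) assms(2) by blast
  have "x ^ (q - 1) = 1" using assms pow_cancel1[of x q] q2 by (simp add: FF_iff)
  hence "gen ^ (i * (q - 1)) = 1" using i by (simp add: power_mult)
  hence "(q - 1) * e dvd i * (q - 1)" unfolding gen_ord eP .
  hence "e dvd i" using q2 by (simp add: mult.commute)
  then obtain c where "i = e * c" by auto
  thus ?thesis using i ediv by auto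
qed

lemma card_FF: "card FF \<le> q"
proof -
  have q2: "q \<ge> 2" by (rule q_ge2)
  define e where "e = (q ^ n - 1) div (q - 1)"
  have "(q ^ 1 - 1) dvd (q ^ n - 1)" using q2 by (intro pow_sub1_dvd) auto
  hence eP: "q ^ n - 1 = (q - 1) * e" unfolding e_def by simp
  define w where "w = gen ^ e"
  have "w ^ (q - 1) = gen ^ ((q - 1) * e)" unfolding w_def by (simp add: power_mult mult.commute)
  hence w1: "w ^ (q - 1) = 1" unfolding eP[symmetric] by (simp add: gen_ord)
  have "FF \<subseteq> insert 0 ((\<lambda>c. w ^ c) ` {..<q - 1})"
  proof
    fix x assume x: "x \<in> FF"
    show "x \<in> insert 0 ((\<lambda>c. w ^ c) ` {..<q - 1})"
    proof (cases "x = 0")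
      case False
      then obtain c where "x = gen ^ (e * c)" using FF_nonzero_form x unfolding e_def by blast
      hence "x = w ^ c" unfolding w_def by (simp add: power_mult)
      hence "x = w ^ (c mod (q - 1))" using pow_mod_order[OF w1] by simp
      moreover have "c mod (q - 1) < q - 1" using q2 by simp
      ultimately show ?thesis by blast
    qed simp
  qed
  hence "card FF \<le> card (insert 0 ((\<lambda>c. w ^ c) ` {..<q - 1}))" by (intro card_mono) auto
  also have "\<dots> \<le> Suc (card ((\<lambda>c. w ^ c) ` {..<q - 1}))" by (rule card_insert_le_m1) auto
  also have "\<dots> \<le> Suc (q - 1)" using card_image_le[of "{..<q-1}" "\<lambda>c. w ^ c"] by simp
  finally show ?thesis using q2 by simp
qed

lemma norm_surj:
  assumes "2 dvd n" "c \<in> FF" "c \<noteq> 0"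
  shows "\<exists>l::'a. l ^ (q ^ 2) = l \<and> l ^ (q + 1) = c"
proof -
  have q2: "q \<ge> 2" by (rule q_ge2)
  have "(q ^ 1 - 1) dvd (q ^ n - 1)" using q2 by (intro pow_sub1_dvd) auto
  then obtain e1 where e1: "q ^ n - 1 = (q - 1) * e1" by auto
  have e1d: "(q ^ n - 1) div (q - 1) = e1" using e1 q2 by simp
  have "(q ^ 2 - 1) dvd (q ^ n - 1)" using q2 assms(1) by (intro pow_sub1_dvd) auto
  then obtain e2 where e2: "q ^ n - 1 = (q ^ 2 - 1) * e2" by auto
  have qq: "q ^ 2 - 1 = (q - 1) * (q + 1)" using q2 by (simp add: power2_eq_square algebra_simps)
  have "(q - 1) * (e2 * (q + 1)) = (q ^ 2 - 1) * e2" unfolding qq by (simp only: mult_ac)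
  hence "(q - 1) * (e2 * (q + 1)) = (q - 1) * e1" using e1 e2 by simp
  hence e21: "e2 * (q + 1) = e1" using q2 by simp
  obtain j where cj: "c = gen ^ (e1 * j)" using FF_nonzero_form[OF assms(2,3)] e1d by auto
  define l where "l = gen ^ (e2 * j)"
  have "l ^ (q + 1) = gen ^ (e2 * j * (q + 1))" unfolding l_def by (simp only: power_mult)
  also have "e2 * j * (q + 1) = e2 * (q + 1) * j" by (simp only: mult_ac)
  finally have "l ^ (q + 1) = gen ^ (e2 * (q + 1) * j)" .
  hence n: "l ^ (q + 1) = c" using e21 cj by simp
  have "l ^ (q ^ 2 - 1) = gen ^ (e2 * j * (q ^ 2 - 1))" unfolding l_def by (simp only: power_mult)
 moreover have "e2 * j * (q ^ 2 - 1) = (q ^ n - 1) * j" unfolding e2 by (simp only: mult_ac)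
  ultimately have "l ^ (q ^ 2 - 1) = gen ^ ((q ^ n - 1) * j)" by metis
  also have "\<dots> = 1" by (simp add: gen_ord)
  finally have "l ^ (q ^ 2) = l" by (rule pow_fix1) (use q2 in simp)
  thus ?thesis using n by blast
qed

end

context ffield
begin

lemma qp_add: "qpoly_eval q n b (x + y) = qpoly_eval q n b x + qpoly_eval q n b (y::'a)"
  unfolding qpoly_eval_def by (simp add: frob_add distrib_left sum.distrib)

lemma qp_0: "qpoly_eval q n b (0::'a) = 0"
proof -
  have "\<And>i. q ^ i > 0" using q_ge2 by simp
  thus ?thesis unfolding qpoly_eval_def by (simp add: zero_power)
qed

lemma qp_neg: "qpoly_eval q n b (- x) = - qpoly_eval q n b (x::'a)"
  using qp_add[of b x "- x"] qp_0[of b] by (simp add: eq_neg_iff_add_eq_0 add.commute)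

lemma qp_diff: "qpoly_eval q n b (x - y) = qpoly_eval q n b x - qpoly_eval q n b (y::'a)"
  using qp_add[of b x "- y"] qp_neg[of b y] by simp

lemma qp_FF: "r \<in> FF \<Longrightarrow> qpoly_eval q n b (r * x) = r * qpoly_eval q n b (x::'a)"
  unfolding qpoly_eval_def by (simp add: FF_pow power_mult_distrib sum_distrib_left mult_ac)

lemma Fs_pow: "(x::'a) ^ (q ^ t) = x \<Longrightarrow> x ^ (q ^ (t * a)) = x"
proof (induct a)
  case (Suc a)
  have "q ^ (t * Suc a) = q ^ (t * a) * q ^ t" by (simp add: power_add)
  hence "x ^ (q ^ (t * Suc a)) = (x ^ (q ^ (t * a))) ^ (q ^ t)" by (simp only: power_mult)
  thus ?case using Suc by simp
qed simp

lemma Fs_mod: "(x::'a) ^ (q ^ t) = x \<Longrightarrow> x ^ (q ^ i) = x ^ (q ^ (i mod t))"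
proof -
  assume x: "x ^ (q ^ t) = x"
  have "q ^ i = q ^ (t * (i div t)) * q ^ (i mod t)"
    by (simp flip: power_add)
  hence "x ^ (q ^ i) = (x ^ (q ^ (t * (i div t)))) ^ (q ^ (i mod t))" by (simp only: power_mult)
  thus ?thesis using Fs_pow[OF x] by simp
qed

lemma Fs_dvd: "(x::'a) ^ (q ^ s) = x \<Longrightarrow> s dvd t \<Longrightarrow> x ^ (q ^ t) = x"
  using Fs_pow by (auto elim!: dvdE)

lemma Fs_closed: "(x::'a) ^ (q ^ t) = x \<Longrightarrow> (x ^ (q ^ i)) ^ (q ^ t) = x ^ (q ^ i)"
  by (metis mult.commute power_mult)

lemma std_decode:
  assumes "standard_form n b"
  shows "t_idx n b dvd n" "t_idx n b \<ge> 2"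
    "\<And>i j. i < n \<Longrightarrow> j < n \<Longrightarrow> b i \<noteq> (0::'a) \<Longrightarrow> b j \<noteq> 0 \<Longrightarrow> i mod t_idx n b = j mod t_idx n b"
proof -
  define t where "t = t_idx n b"
  show tn: "t_idx n b dvd n" unfolding t_idx_def Delta_def by (rule Gcd_dvd) simp
  show "t_idx n b \<ge> 2" using assms unfolding standard_form_def by simp
  fix i j assume ij: "i < n" "j < n" "b i \<noteq> 0" "b j \<noteq> 0"
  show "i mod t_idx n b = j mod t_idx n b"
  proof (cases "i = j")
    case False
    moreover have "b i * b j \<noteq> 0" using ij by simp
    ultimately have "(i + n - j) mod n \<in> Delta n b" unfolding Delta_def using ij by blast
    hence "t dvd (i + n - j) mod n" unfolding t_def t_idx_def by (rule Gcd_dvd)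
    hence "t dvd (i + n - j)" using tn unfolding t_def by (simp add: dvd_mod_iff)
    hence "(i + n) mod t = j mod t" using ij by (subst mod_eq_dvd_iff_nat) auto
    moreover have "(i + n) mod t = i mod t"
    proof -
      have tn': "t dvd n" using tn t_def by simp
      obtain k where k: "n = t * k" using tn' by (rule dvdE)
      show ?thesis by (simp only: k) simp
    qed
    ultimately show ?thesis unfolding t_def by simp
  qed simp
qed

lemma qp_semilin:
  assumes "standard_form n b" "i0 < n" "b i0 \<noteq> 0" "(l::'a) ^ (q ^ t_idx n b) = l"
  shows "qpoly_eval q n b (l * x) = l ^ (q ^ i0) * qpoly_eval q n b x"
proof -
  have *: "\<And>i. i < n \<Longrightarrow> b i * (l * x) ^ (q ^ i) = l ^ (q ^ i0) * (b i * x ^ (q ^ i))"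
  proof -
    fix i assume i: "i < n"
    show "b i * (l * x) ^ (q ^ i) = l ^ (q ^ i0) * (b i * x ^ (q ^ i))"
    proof (cases "b i = 0")
      case False
      have "l ^ (q ^ i) = l ^ (q ^ (i mod t_idx n b))" by (rule Fs_mod[OF assms(4)])
      also have "i mod t_idx n b = i0 mod t_idx n b" using std_decode(3)[OF assms(1) i assms(2) False assms(3)] .
      also have "l ^ (q ^ (i0 mod t_idx n b)) = l ^ (q ^ i0)" by (rule Fs_mod[OF assms(4), symmetric])
      finally show ?thesis by (simp add: power_mult_distrib mult_ac)
    qed simp
  qed
  show ?thesis unfolding qpoly_eval_def sum_distrib_left by (rule sum.cong) (auto simp: *)
qed

end

locale spoly = ffield q n ty for q n :: nat and ty :: "'a::{finite,field} itself" +
  fixes b :: "nat \<Rightarrow> 'a::{finite,field}"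
  assumes scat: "scattered q n b" and stdf: "standard_form n b"
begin

abbreviation H where "H \<equiv> qpoly_eval q n b"
definition tt where "tt = t_idx n b"
definition i0 where "i0 = (SOME i. i < n \<and> b i \<noteq> 0)"

lemma scat_rule: "z * H y - y * H z = 0 \<Longrightarrow> Fq_lin_dep q y z"
  using scat unfolding scattered_def by blast

lemma lin_not_FF: assumes "l \<notin> FF" "\<forall>x. H (l * x) = l * H x" shows False
proof -
  have "1 * H l - l * H 1 = 0" using assms(2)[rule_format, of 1] by simp
  hence "Fq_lin_dep q l 1" by (rule scat_rule)
  then obtain r where "r \<in> FF" "l = r * 1" using dep_mult[of l 1] by auto
  thus False using assms(1) by simp
qed

lemma b_nonzero: "\<exists>i<n. b i \<noteq> 0"
proof (rule ccontr)
  assume "\<not> ?thesis"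
  hence H0: "\<And>x. H x = 0" unfolding qpoly_eval_def by simp
  have "n \<ge> 2" using n1 by simp
  then obtain l :: 'a where l: "l ^ (q ^ n) = l" "l ^ q \<noteq> l" using G1[of n] by auto
  have "l \<notin> FF" using l(2) by (simp add: FF_iff)
  moreover have "\<forall>x. H (l * x) = l * H x" using H0 by simp
  ultimately show False by (rule lin_not_FF)
qed

lemma i0_both: "i0 < n \<and> b i0 \<noteq> 0"
proof -
  have "\<exists>i. i < n \<and> b i \<noteq> 0" using b_nonzero by blast
  thus ?thesis unfolding i0_def by (rule someI_ex)
qed

lemma i0: "i0 < n" "b i0 \<noteq> 0" using i0_both by auto

lemma tt: "tt dvd n" "tt \<ge> 2"
  using std_decode[OF stdf] unfolding tt_def by auto

lemma semi: "l ^ (q ^ tt) = l \<Longrightarrow> H (l * x) = l ^ (q ^ i0) * H x"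
  using qp_semilin[OF stdf i0] unfolding tt_def by blast

lemma K: assumes "l ^ (q ^ tt) = l" "l ^ (q ^ i0) = l" shows "l \<in> FF"
proof (rule ccontr)
  assume "l \<notin> FF"
  moreover have "\<forall>x. H (l * x) = l * H x" using semi[OF assms(1)] assms(2) by simp
  ultimately show False by (rule lin_not_FF)
qed

lemma S3: "\<exists>l::'a. l ^ (q ^ tt) = l \<and> l ^ (q ^ i0) \<noteq> l"
proof -
  obtain l :: 'a where l: "l ^ (q ^ tt) = l" "l ^ q \<noteq> l" using G1[OF tt(1) tt(2)] by blast
  hence "l \<notin> FF" by (simp add: FF_iff)
  thus ?thesis using K l by blast
qed

lemma Hinj0: "H x = 0 \<Longrightarrow> x = 0"
proof (rule ccontr)
  assume hx: "H x = 0" and x0: "x \<noteq> 0"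
  obtain l :: 'a where l: "l ^ (q ^ tt) = l" "l ^ q \<noteq> l" using G1[OF tt(1) tt(2)] by blast
  have "H (l * x) = 0" using semi[OF l(1)] hx by simp
  hence "x * H (l * x) - (l * x) * H x = 0" using hx by simp
  hence "Fq_lin_dep q (l * x) x" by (rule scat_rule)
  then obtain r where r: "r \<in> FF" "l * x = r * x" using dep_mult x0 by blast
  hence "l = r" using x0 by simp
  thus False using r l(2) by (simp add: FF_iff)
qed

lemma Hinj: "inj H"
proof (rule injI)
  fix x y assume "H x = H y"
  hence "H (x - y) = 0" by (simp add: qp_diff)
  hence "x - y = 0" by (rule Hinj0)
  thus "x = y" by simp
qed

lemma Hbij: "bij H"
  using Hinj finite_UNIV_inj_surj[of H] by (simp add: bij_def)

lemma Hnz: "x \<noteq> 0 \<Longrightarrow> H x \<noteq> 0" using Hinj0 by blast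

lemma coprime_i0: "coprime i0 tt"
proof (rule ccontr)
  assume nc: "\<not> coprime i0 tt"
  define d where "d = gcd i0 tt"
  have "d \<noteq> 1" using nc unfolding d_def by (simp add: coprime_iff_gcd_eq_1)
  moreover have "d > 0" using tt unfolding d_def by simp
  ultimately have d2: "d \<ge> 2" by simp
  have dt: "d dvd tt" "d dvd i0" unfolding d_def by simp_all
  have "d dvd n" using dt(1) tt(1) by (rule dvd_trans)
  then obtain l :: 'a where l: "l ^ (q ^ d) = l" "l ^ q \<noteq> l" using G1 d2 by blast
  have "l ^ (q ^ tt) = l" using Fs_dvd[OF l(1) dt(1)] .
  moreover have "l ^ (q ^ i0) = l" using Fs_dvd[OF l(1) dt(2)] .
  ultimately have "l \<in> FF" by (rule K)
  thus False using l(2) by (simp add: FF_iff)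
qed

lemma t2:
  assumes "\<forall>l::'a. l ^ (q ^ tt) = l \<longrightarrow> (l ^ (q ^ i0)) ^ (q ^ i0) = l"
  shows "tt = 2" "odd i0"
proof -
  have "\<forall>l::'a. l ^ (q ^ tt) = l \<longrightarrow> l ^ (q ^ (2 * i0)) = l"
  proof (intro allI impI)
    fix l :: 'a assume "l ^ (q ^ tt) = l"
    hence "(l ^ (q ^ i0)) ^ (q ^ i0) = l" using assms by blast
    moreover have "q ^ (2 * i0) = q ^ i0 * q ^ i0" by (simp add: mult_2 power_add)
    ultimately show "l ^ (q ^ (2 * i0)) = l" by (simp add: power_mult)
  qed
  hence "tt dvd 2 * i0" using FixAll[OF tt(1)] tt(2) by simp
  hence "tt dvd 2" using coprime_dvd_mult_left_iff[of tt i0 2] coprime_i0 by (simp add: coprime_commute mult.commute)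
  hence "tt \<le> 2" by (simp add: dvd_imp_le)
  thus "tt = 2" using tt(2) by simp
  thus "odd i0" using coprime_i0 coprime_right_2_iff_odd[of i0] by simp
qed

end

context spoly
begin

lemma dep_mult': "Fq_lin_dep q y z \<Longrightarrow> z \<noteq> 0 \<Longrightarrow> \<exists>r. r \<in> FF \<and> y = r * z"
  using dep_mult by blast

lemma no_antidiag:
  assumes n3: "n \<ge> 3" and J: "\<forall>x. H (g * H x) = c * x" and nz: "c \<noteq> 0 \<or> g \<noteq> 0"
  shows False
proof -
  have g0: "g \<noteq> 0"
  proof
    assume "g = 0"
    hence "c * 1 = 0" using J[rule_format, of 1] qp_0 by simp
    thus False using nz \<open>g = 0\<close> by simp
  qed
  have c0: "c \<noteq> 0"
  proof
    assume "c = 0"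
    hence "H (g * H 1) = 0" using J by simp
    hence "g * H 1 = 0" by (rule Hinj0)
    thus False using g0 Hnz[of 1] by simp
  qed
  have T: "\<forall>l::'a. l ^ (q ^ tt) = l \<longrightarrow> (l ^ (q ^ i0)) ^ (q ^ i0) = l"
  proof (intro allI impI)
    fix l :: 'a assume l: "l ^ (q ^ tt) = l"
    have ls: "(l ^ (q ^ i0)) ^ (q ^ tt) = l ^ (q ^ i0)" by (rule Fs_closed[OF l])
    have e1: "H (g * H l) = c * l" using J by simp
    have e2: "H l = l ^ (q ^ i0) * H 1" using semi[OF l, of 1] by simp
    have e3: "H (l ^ (q ^ i0) * (g * H 1)) = (l ^ (q ^ i0)) ^ (q ^ i0) * H (g * H 1)"
      by (rule semi[OF ls])
    have e4: "H (g * H 1) = c" using J[rule_format, of 1] by simp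
    have "g * H l = l ^ (q ^ i0) * (g * H 1)" using e2 by (simp add: mult_ac)
    hence "H (g * H l) = H (l ^ (q ^ i0) * (g * H 1))" by (rule arg_cong)
    hence "(l ^ (q ^ i0)) ^ (q ^ i0) * c = c * l" using e1 e3 e4 by metis
    thus "(l ^ (q ^ i0)) ^ (q ^ i0) = l" using c0 by (simp add: mult.commute)
  qed
  have tt2: "tt = 2" and oi: "odd i0" using t2[OF T] by auto
  define c1 where "c1 = c * g"
  have Hc1: "H (c1 * x) = c1 * H x" for x
  proof -
    have "H (g * H (g * H x)) = c * (g * H x)" using J by blast
    thus ?thesis unfolding c1_def using J by (simp add: mult_ac)
  qed
  have "1 * H c1 - c1 * H 1 = 0" using Hc1[of 1] by simp
  hence "Fq_lin_dep q c1 1" by (rule scat_rule)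
  then obtain r where "r \<in> FF" "c1 = r * 1" using dep_mult'[of c1 1] by auto
  hence c1F: "c1 \<in> FF" by simp
  have c10: "c1 \<noteq> 0" unfolding c1_def using c0 g0 by simp
  have "2 dvd n" using tt(1) tt2 by simp
  then obtain l :: 'a where l: "l ^ (q ^ 2) = l" "l ^ (q + 1) = c1" using norm_surj c1F c10 by blast
  have l0: "l \<noteq> 0" using l(2) c10 by auto
  have lt: "l ^ (q ^ tt) = l" using l(1) tt2 by simp
  have "l ^ (q ^ i0) = l ^ (q ^ (i0 mod 2))" by (rule Fs_mod[OF l(1)])
  hence lsig: "l ^ (q ^ i0) = l ^ q" using oi by (simp add: odd_iff_mod_2_eq_one)
  have Hl: "H (l * x) = l ^ q * H x" for x using semi[OF lt] lsig by simp
  define phi where "phi x = l * x + g * H x" for x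
  have Hphi: "H (phi x) = l ^ q * H x + c * x" for x
    unfolding phi_def using Hl J by (simp add: qp_add)
  have key: "l * H (phi x) = c * phi x" for x
  proof -
    have "l * H (phi x) = l ^ (q + 1) * H x + c * l * x"
      unfolding Hphi by (simp add: algebra_simps power_Suc2 mult.commute)
    also have "\<dots> = c * phi x" unfolding l(2) phi_def c1_def by (simp add: algebra_simps)
    finally show ?thesis .
  qed
  have Hphi2: "H (phi x) = (c / l) * phi x" for x using key[of x] l0
    by (simp add: field_simps)
  have phi_add: "phi (x - y) = phi x - phi y" for x y
    unfolding phi_def by (simp add: qp_diff algebra_simps)
  have phi_FF: "r \<in> FF \<Longrightarrow> phi (r * x) = r * phi x" for r x
    unfolding phi_def by (simp add: qp_FF algebra_simps)
  have dep_im: "Fq_lin_dep q (phi x) (phi y)" for x y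
    by (rule scat_rule) (simp add: Hphi2 mult_ac)
  have dep_ker: "phi x = 0 \<Longrightarrow> phi y = 0 \<Longrightarrow> Fq_lin_dep q x y" for x y
  proof -
    assume a: "phi x = 0" "phi y = 0"
    have hx: "H x = - (l / g) * x" using a(1) g0 unfolding phi_def by (simp add: field_simps eq_neg_iff_add_eq_0)
    have hy: "H y = - (l / g) * y" using a(2) g0 unfolding phi_def by (simp add: field_simps eq_neg_iff_add_eq_0)
    show ?thesis by (rule scat_rule) (simp add: hx hy mult_ac)
  qed
  define z0 where "z0 = (if \<exists>z. phi z \<noteq> 0 then (SOME z. phi z \<noteq> 0) else 0)"
  define x0 where "x0 = (if \<exists>x. x \<noteq> 0 \<and> phi x = 0 then (SOME x. x \<noteq> 0 \<and> phi x = 0) else 0)"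
  have ker_form: "phi w = 0 \<Longrightarrow> \<exists>r1\<in>FF. w = r1 * x0" for w
  proof -
    assume w: "phi w = 0"
    show ?thesis
    proof (cases "w = 0")
      case True thus ?thesis using FF_0 by auto
    next
      case False
      hence ex: "\<exists>x. x \<noteq> 0 \<and> phi x = 0" using w by blast
      have "x0 = (SOME x. x \<noteq> 0 \<and> phi x = 0)" unfolding x0_def using ex by simp
      hence x0: "x0 \<noteq> 0 \<and> phi x0 = 0" using someI_ex[OF ex] by simp
      have "Fq_lin_dep q w x0" using dep_ker w x0 by blast
      thus ?thesis using dep_mult x0 by blast
    qed
  qed
  have span: "\<exists>r1\<in>FF. \<exists>r2\<in>FF. x = r1 * x0 + r2 * z0" for x
  proof (cases "\<exists>z. phi z \<noteq> 0")
    case True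
    have "z0 = (SOME z. phi z \<noteq> 0)" unfolding z0_def using True by simp
    hence z0: "phi z0 \<noteq> 0" using someI_ex[OF True] by simp
    obtain r where r: "r \<in> FF" "phi x = r * phi z0" using dep_mult[OF dep_im[of x z0] z0] by blast
    have "phi (x - r * z0) = 0" using phi_add phi_FF[OF r(1)] r(2) by simp
    then obtain r1 where r1: "r1 \<in> FF" "x - r * z0 = r1 * x0" using ker_form by blast
    hence "x = r1 * x0 + r * z0" by (simp add: algebra_simps)
    thus ?thesis using r(1) r1(1) by blast
  next
    case False
    hence "phi x = 0" by blast
    then obtain r1 where r1: "r1 \<in> FF" "x = r1 * x0" using ker_form by blast
    thus ?thesis using FF_0 by (intro bexI[of _ r1] bexI[of _ 0]) auto
  qed
  have "(UNIV :: 'a set) \<subseteq> (\<lambda>(r1, r2). r1 * x0 + r2 * z0) ` (FF \<times> FF)"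
  proof
    fix x :: 'a assume "x \<in> UNIV"
    obtain r1 r2 where r: "r1 \<in> FF" "r2 \<in> FF" "x = r1 * x0 + r2 * z0" using span[of x] by blast
    hence "(r1, r2) \<in> FF \<times> FF" by simp
    thus "x \<in> (\<lambda>(r1, r2). r1 * x0 + r2 * z0) ` (FF \<times> FF)" using r(3) by force
  qed
  hence "card (UNIV :: 'a set) \<le> card ((\<lambda>(r1, r2). r1 * x0 + r2 * z0) ` (FF \<times> FF))"
    by (intro card_mono) auto
  also have "\<dots> \<le> card (FF \<times> FF)" by (rule card_image_le) simp
  also have "\<dots> = card FF * card FF" by (simp add: card_cartesian_product)
  also have "\<dots> \<le> q * q" using card_FF by (intro mult_mono) auto
  finally have le: "q ^ n \<le> q ^ 2" using cardF by (simp add: power2_eq_square)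
  have "q ^ 2 < q ^ n" using q_ge2 n3 by (intro power_strict_increasing) auto
  thus False using le by simp
qed

end

definition mmul :: "'a::field \<times> 'a \<times> 'a \<times> 'a \<Rightarrow> 'a \<times> 'a \<times> 'a \<times> 'a \<Rightarrow> 'a \<times> 'a \<times> 'a \<times> 'a" where
  "mmul M N = (case M of (a, b, c, d) \<Rightarrow> case N of (a', b', c', d') \<Rightarrow>
     (a * a' + b * c', a * b' + b * d', c * a' + d * c', c * b' + d * d'))"

definition minv :: "'a::field \<times> 'a \<times> 'a \<times> 'a \<Rightarrow> 'a \<times> 'a \<times> 'a \<times> 'a" where
  "minv M = (case M of (a, b, c, d) \<Rightarrow> let D = a * d - b * c in (d / D, - b / D, - c / D, a / D))"

definition mdet :: "'a::field \<times> 'a \<times> 'a \<times> 'a \<Rightarrow> 'a" where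
  "mdet M = (case M of (a, b, c, d) \<Rightarrow> a * d - b * c)"

lemma act_mmul: "mat_act (mmul M N) v = mat_act N (mat_act M v)"
  by (cases M, cases N, cases v) (simp add: mmul_def mat_act_def algebra_simps)

lemma inv1: "mdet M \<noteq> 0 \<Longrightarrow> mat_act (minv M) (mat_act M v) = v"
proof -
  assume dM: "mdet M \<noteq> 0"
  obtain a b c d where M: "M = (a, b, c, d)" by (cases M) auto
  obtain u w where v: "v = (u, w)" by (cases v) auto
  define D where "D = a * d - b * c"
  have D0: "D \<noteq> 0" using dM M unfolding D_def mdet_def by simp
  have e1: "(u * a + w * c) * (d / D) + (u * b + w * d) * (- c / D) = u * D / D"
    unfolding D_def by (simp add: field_simps add_divide_distrib diff_divide_distrib; simp add: algebra_simps)
  have e2: "(u * a + w * c) * (- b / D) + (u * b + w * d) * (a / D) = w * D / D"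
    unfolding D_def by (simp add: field_simps add_divide_distrib diff_divide_distrib; simp add: algebra_simps)
  show ?thesis using e1 e2 D0 unfolding M v minv_def mat_act_def D_def by (simp add: Let_def)
qed

lemma inv2: "mdet M \<noteq> 0 \<Longrightarrow> mat_act M (mat_act (minv M) v) = v"
proof -
  assume dM: "mdet M \<noteq> 0"
  obtain a b c d where M: "M = (a, b, c, d)" by (cases M) auto
  obtain u w where v: "v = (u, w)" by (cases v) auto
  define D where "D = a * d - b * c"
  have D0: "D \<noteq> 0" using dM M unfolding D_def mdet_def by simp
  have e1: "(u * (d / D) + w * (- c / D)) * a + (u * (- b / D) + w * (a / D)) * c = u * D / D"
    unfolding D_def by (simp add: field_simps add_divide_distrib diff_divide_distrib; simp add: algebra_simps)
  have e2: "(u * (d / D) + w * (- c / D)) * b + (u * (- b / D) + w * (a / D)) * d = w * D / D"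
    unfolding D_def by (simp add: field_simps add_divide_distrib diff_divide_distrib; simp add: algebra_simps)
  show ?thesis using e1 e2 D0 unfolding M v minv_def mat_act_def D_def by (simp add: Let_def)
qed

lemma det_mmul: "mdet (mmul M N) = mdet M * mdet N"
  by (cases M, cases N) (simp add: mmul_def mdet_def algebra_simps)

lemma det_minv: "mdet M \<noteq> 0 \<Longrightarrow> mdet (minv M) \<noteq> 0"
proof -
  assume dM: "mdet M \<noteq> 0"
  obtain a b c d where M: "M = (a, b, c, d)" by (cases M) auto
  define D where "D = a * d - b * c"
  have D0: "D \<noteq> 0" using dM M unfolding D_def mdet_def by simp
  have "(d / D) * (a / D) - (- b / D) * (- c / D) = (d * a) / (D * D) - (b * c) / (D * D)"
    by simp
  also have "\<dots> = (a * d - b * c) / (D * D)" by (simp add: diff_divide_distrib mult.commute)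
  also have "\<dots> = D / (D * D)" unfolding D_def ..
  also have "\<dots> = 1 / D" using D0 by simp
  finally have "mdet (minv M) = 1 / D" unfolding M minv_def mdet_def D_def by (simp add: Let_def)
  thus ?thesis using D0 by simp
qed

definition maps :: "('a::field \<Rightarrow> 'a) \<Rightarrow> ('a \<Rightarrow> 'a) \<Rightarrow> 'a \<times> 'a \<times> 'a \<times> 'a \<Rightarrow> bool" where
  "maps H1 H2 M \<longleftrightarrow> (\<forall>x. snd (mat_act M (x, H1 x)) = H2 (fst (mat_act M (x, H1 x))))"

lemma mapsD: "maps H1 H2 M \<Longrightarrow> mat_act M (x, H1 x) = (fst (mat_act M (x, H1 x)), H2 (fst (mat_act M (x, H1 x))))"
  unfolding maps_def by (metis prod.collapse)

lemma maps_comp: "maps H1 H2 M \<Longrightarrow> maps H2 H3 N \<Longrightarrow> maps H1 H3 (mmul M N)"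
  unfolding maps_def act_mmul by (metis prod.collapse)

lemma maps_eq: "maps H1 H2 (a, b, c, d) \<longleftrightarrow> (\<forall>x. H2 (x * a + H1 x * c) = x * b + H1 x * d)"
  unfolding maps_def mat_act_def by (auto simp: eq_commute)

context ffield
begin

lemma diag_or_anti:
  fixes b1 b2 :: "nat \<Rightarrow> 'a" and a b c d :: 'a
  assumes P1: "spoly q n b1" and P2: "spoly q n b2" and n3: "n \<ge> 3"
    and mA: "maps (qpoly_eval q n b1) (qpoly_eval q n b2) (a, b, c, d)"
    and mB: "maps (qpoly_eval q n b2) (qpoly_eval q n b1) (minv (a, b, c, d))"
    and dA: "a * d - b * c \<noteq> 0"
  shows "(b = 0 \<and> c = 0) \<or> (a = 0 \<and> d = 0)"
proof -
  interpret P1: spoly q n ty b1 by (rule P1)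
  interpret P2: spoly q n ty b2 by (rule P2)
  let ?H1 = "qpoly_eval q n b1" and ?H2 = "qpoly_eval q n b2"
  obtain mu :: 'a where mu: "mu ^ (q ^ P2.tt) = mu" "mu ^ (q ^ P2.i0) \<noteq> mu" using P2.S3 by blast
  define nu where "nu = mu ^ (q ^ P2.i0)"
  have mD: "maps ?H2 ?H2 (mu, 0, 0, nu)"
    unfolding maps_eq using P2.semi[OF mu(1)] by (simp add: mult.commute nu_def)
  define N where "N = mmul (a, b, c, d) (mmul (mu, 0, 0, nu) (minv (a, b, c, d)))"
  have mN: "maps ?H1 ?H1 N" unfolding N_def by (rule maps_comp[OF mA maps_comp[OF mD mB]])
  define D where "D = a * d - b * c"
  obtain N11 N12 N21 N22 where NN: "N = (N11, N12, N21, N22)" by (cases N) auto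
  have N12: "N12 = a * b * (nu - mu) / D" and N21: "N21 = c * d * (mu - nu) / D"
    using NN dA unfolding N_def mmul_def minv_def D_def Let_def
    by (simp_all add: field_simps)
  have E: "\<And>x. ?H1 (x * N11 + ?H1 x * N21) = x * N12 + ?H1 x * N22"
    using mN unfolding NN maps_eq by blast
  obtain la :: 'a where la: "la ^ (q ^ P1.tt) = la" "la ^ (q ^ P1.i0) \<noteq> la" using P1.S3 by blast
  define la' where "la' = la ^ (q ^ P1.i0)"
  have semi1: "\<And>x. ?H1 (la * x) = la' * ?H1 x" using P1.semi[OF la(1)] unfolding la'_def by blast
  define g where "g = (la' - la) * N21"
  define c0 where "c0 = (la - la') * N12"
  have Jeq: "\<forall>x. ?H1 (g * ?H1 x) = c0 * x"
  proof
    fix x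
    have e1: "?H1 ((la * x) * N11 + (la' * ?H1 x) * N21) = (la * x) * N12 + (la' * ?H1 x) * N22"
      using E[of "la * x"] semi1[of x] by simp
    have e2: "?H1 (la * (x * N11 + ?H1 x * N21)) = la' * (x * N12 + ?H1 x * N22)"
      using semi1[of "x * N11 + ?H1 x * N21"] E[of x] by simp
    have arg: "g * ?H1 x = ((la * x) * N11 + (la' * ?H1 x) * N21) - la * (x * N11 + ?H1 x * N21)"
      unfolding g_def by (simp add: algebra_simps)
    have "?H1 (g * ?H1 x) = ?H1 ((la * x) * N11 + (la' * ?H1 x) * N21) - ?H1 (la * (x * N11 + ?H1 x * N21))"
      unfolding arg by (rule qp_diff)
    also have "\<dots> = c0 * x" unfolding e1 e2 c0_def by (simp add: algebra_simps)
    finally show "?H1 (g * ?H1 x) = c0 * x" .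
  qed
  have "\<not> (c0 \<noteq> 0 \<or> g \<noteq> 0)" using P1.no_antidiag[OF n3 Jeq] by blast
  moreover have "la - la' \<noteq> 0" "la' - la \<noteq> 0" using la(2) unfolding la'_def by auto
  ultimately have "N12 = 0" "N21 = 0" unfolding g_def c0_def by auto
  moreover have "nu - mu \<noteq> 0" "mu - nu \<noteq> 0" using mu(2) unfolding nu_def by auto
  moreover have "D \<noteq> 0" using dA unfolding D_def .
  ultimately have ab: "a * b = 0" and cd: "c * d = 0" unfolding N12 N21 by auto
  show ?thesis
  proof (cases "a = 0")
    case True
    thus ?thesis using cd dA by auto
  next
    case False
    hence "b = 0" using ab by simp
    hence "c = 0" using dA cd by auto
    thus ?thesis using \<open>b = 0\<close> by simp
  qed
qed

end

context spoly
begin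

lemma n2_form:
  assumes n2: "n = 2"
  shows "b 1 \<noteq> 0" "\<And>x. H x = b 1 * x ^ q"
proof -
  have "tt dvd 2" using tt(1) n2 by simp
  hence "tt \<le> 2" by (simp add: dvd_imp_le)
  hence tt2: "tt = 2" using tt(2) by simp
  obtain l :: 'a where l: "l ^ (q ^ tt) = l" "l ^ (q ^ i0) \<noteq> l" using S3 by blast
  have "i0 \<noteq> 0" using l(2) by (cases "i0 = 0") auto
  hence i01: "i0 = 1" using i0(1) n2 by simp
  show b1: "b 1 \<noteq> 0" using i0(2) i01 by simp
  have b0: "b 0 = 0"
  proof (rule ccontr)
    assume "b 0 \<noteq> 0"
    hence "0 mod t_idx n b = 1 mod t_idx n b" using std_decode(3)[OF stdf, of 0 1] b1 n2 by simp
    thus False using tt2 unfolding tt_def by simp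
  qed
  fix x
  show "H x = b 1 * x ^ q" unfolding qpoly_eval_def n2 using b0
    by (simp add: numeral_2_eq_2 lessThan_Suc)
qed

end

lemma GL_maps:
  fixes b1 b2 :: "nat \<Rightarrow> 'a::field"
  assumes "GL_equiv q n b1 b2"
  shows "\<exists>M. mdet M \<noteq> 0 \<and> maps (qpoly_eval q n b1) (qpoly_eval q n b2) M
             \<and> maps (qpoly_eval q n b2) (qpoly_eval q n b1) (minv M)"
proof -
  let ?H1 = "qpoly_eval q n b1" and ?H2 = "qpoly_eval q n b2"
  obtain a b c d where det: "a * d - b * c \<noteq> 0"
    and img: "mat_act (a, b, c, d) ` U_set q n b1 = U_set q n b2"
    using assms unfolding GL_equiv_def by blast
  define M where "M = (a, b, c, d)"
  have dM: "mdet M \<noteq> 0" using det unfolding M_def mdet_def by simp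
  have m1: "maps ?H1 ?H2 M" unfolding maps_def
  proof
    fix x
    have "(x, ?H1 x) \<in> U_set q n b1" unfolding U_set_def by blast
    hence "mat_act M (x, ?H1 x) \<in> U_set q n b2" using img unfolding M_def by blast
    then obtain y where "mat_act M (x, ?H1 x) = (y, ?H2 y)" unfolding U_set_def by blast
    thus "snd (mat_act M (x, ?H1 x)) = ?H2 (fst (mat_act M (x, ?H1 x)))" by simp
  qed
  have m2: "maps ?H2 ?H1 (minv M)" unfolding maps_def
  proof
    fix y
    have "(y, ?H2 y) \<in> U_set q n b2" unfolding U_set_def by blast
    hence "(y, ?H2 y) \<in> mat_act M ` U_set q n b1" using img unfolding M_def by simp
    then obtain x where "(y, ?H2 y) = mat_act M (x, ?H1 x)" unfolding U_set_def by blast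
    hence "mat_act (minv M) (y, ?H2 y) = (x, ?H1 x)" using inv1[OF dM] by simp
    thus "snd (mat_act (minv M) (y, ?H2 y)) = ?H1 (fst (mat_act (minv M) (y, ?H2 y)))" by simp
  qed
  show ?thesis using dM m1 m2 by blast
qed

unbundle no m_inv_syntax

unbundle no m_inv_syntax

theorem proposition4p8:
  fixes q n :: nat and f h h' :: "nat \<Rightarrow> 'a::{finite,field}"
  assumes "prime_power q" and "n > 1" and "CARD('a) = q ^ n"
    and "scattered q n f"
    and "scattered q n h" and "standard_form n h"
    and "scattered q n h'" and "standard_form n h'"
    and "GL_equiv q n h f" and "GL_equiv q n h' f"
  shows "\<exists>a b. a \<noteq> 0 \<and> b \<noteq> 0 \<and>
           ((\<forall>x. qpoly_eval q n h' x = a * qpoly_eval q n h (b * x)) \<or>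
            (\<forall>x. qpoly_eval q n h' x = a * inv (qpoly_eval q n h) (b * x)))"
proof -
  have Sf: "ffield TYPE('a) q n" using assms(1-3) by (simp add: ffield_def)
  have Sp: "spoly q n h" using assms(1-3,5,6) by (simp add: spoly_def spoly_axioms_def ffield_def)
  have Sp': "spoly q n h'" using assms(1-3,7,8) by (simp add: spoly_def spoly_axioms_def ffield_def)
  interpret FF: ffield q n "TYPE('a)" by (rule Sf)
  interpret P: spoly q n "TYPE('a)" h by (rule Sp)
  interpret P': spoly q n "TYPE('a)" h' by (rule Sp')
  let ?H = "qpoly_eval q n h" and ?H' = "qpoly_eval q n h'" and ?F = "qpoly_eval q n f"
  show ?thesis
  proof (cases "n = 2")
    case True
    define a where "a = h' 1 / h 1"
    have h1: "h 1 \<noteq> 0" by (rule P.n2_form(1)[OF True])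
    have h1': "h' 1 \<noteq> 0" by (rule P'.n2_form(1)[OF True])
    have a0: "a \<noteq> 0" unfolding a_def using h1 h1' by simp
    have ax: "\<forall>x. ?H' x = a * ?H (1 * x)"
    proof
      fix x
      have e1: "?H' x = h' 1 * x ^ q" by (rule P'.n2_form(2)[OF True])
      have e2: "?H (1 * x) = h 1 * x ^ q" using P.n2_form(2)[OF True, of x] by simp
      show "?H' x = a * ?H (1 * x)" unfolding e1 e2 a_def using h1 by simp
    qed
    show ?thesis using a0 ax by (intro exI[of _ a] exI[of _ 1]) simp
  next
    case False
    hence n3: "n \<ge> 3" using assms(2) by simp
    obtain M1 where M1: "mdet M1 \<noteq> 0" "maps ?H ?F M1" "maps ?F ?H (minv M1)"
      using GL_maps[OF assms(9)] by blast
    obtain M2 where M2: "mdet M2 \<noteq> 0" "maps ?H' ?F M2" "maps ?F ?H' (minv M2)"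
      using GL_maps[OF assms(10)] by blast
    define A where "A = mmul M1 (minv M2)"
    have dA: "mdet A \<noteq> 0" unfolding A_def det_mmul using M1(1) det_minv[OF M2(1)] by simp
    have mA: "maps ?H ?H' A" unfolding A_def by (rule maps_comp[OF M1(2) M2(3)])
    have surjA: "\<exists>x. mat_act A (x, ?H x) = (y, ?H' y)" for y
    proof -
      define z where "z = fst (mat_act M2 (y, ?H' y))"
      have z: "mat_act M2 (y, ?H' y) = (z, ?F z)" unfolding z_def by (rule mapsD[OF M2(2)])
      define x where "x = fst (mat_act (minv M1) (z, ?F z))"
      have x: "mat_act (minv M1) (z, ?F z) = (x, ?H x)" unfolding x_def by (rule mapsD[OF M1(3)])
      have "mat_act M1 (x, ?H x) = (z, ?F z)" using inv2[OF M1(1), of "(z, ?F z)"] x by simp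
      hence "mat_act A (x, ?H x) = mat_act (minv M2) (z, ?F z)" unfolding A_def act_mmul by simp
      also have "\<dots> = (y, ?H' y)" using inv1[OF M2(1), of "(y, ?H' y)"] z by simp
      finally show ?thesis by blast
    qed
    have mB: "maps ?H' ?H (minv A)" unfolding maps_def
    proof
      fix y
      obtain x where "mat_act A (x, ?H x) = (y, ?H' y)" using surjA by blast
      hence "mat_act (minv A) (y, ?H' y) = (x, ?H x)" using inv1[OF dA, of "(x, ?H x)"] by simp
      thus "snd (mat_act (minv A) (y, ?H' y)) = ?H (fst (mat_act (minv A) (y, ?H' y)))" by simp
    qed
    obtain a b c d where A: "A = (a, b, c, d)" by (cases A) auto
    have det: "a * d - b * c \<noteq> 0" using dA unfolding A mdet_def by simp
    have mA': "\<forall>x. ?H' (x * a + ?H x * c) = x * b + ?H x * d" using mA unfolding A maps_eq .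
    have mA2: "maps ?H ?H' (a, b, c, d)" using mA unfolding A .
    have mB2: "maps ?H' ?H (minv (a, b, c, d))" using mB unfolding A .
    have "(b = 0 \<and> c = 0) \<or> (a = 0 \<and> d = 0)"
      by (rule FF.diag_or_anti[OF Sp Sp' n3 mA2 mB2 det])
    thus ?thesis
    proof
      assume bc: "b = 0 \<and> c = 0"
      hence ad: "a \<noteq> 0" "d \<noteq> 0" using det by auto
      have "\<forall>x. ?H' x = d * ?H (inverse a * x)"
      proof
        fix x
        have "?H' ((inverse a * x) * a + ?H (inverse a * x) * c) = (inverse a * x) * b + ?H (inverse a * x) * d"
          using mA' by blast
        hence "?H' ((inverse a * x) * a) = ?H (inverse a * x) * d" using bc by simp
        moreover have xa: "(inverse a * x) * a = x" using ad(1) by (simp add: field_simps)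
        ultimately have "?H' x = ?H (inverse a * x) * d" by simp
        thus "?H' x = d * ?H (inverse a * x)" by (simp add: mult.commute)
      qed
      thus ?thesis using ad by (intro exI[of _ d] exI[of _ "inverse a"]) simp
    next
      assume ad: "a = 0 \<and> d = 0"
      hence bc: "b \<noteq> 0" "c \<noteq> 0" using det by auto
      have sH: "surj ?H" using P.Hbij by (simp add: bij_def)
      have "\<forall>y. ?H' y = b * inv ?H (inverse c * y)"
      proof
        fix y
        define x where "x = inv ?H (inverse c * y)"
        have hx: "?H x = inverse c * y" unfolding x_def by (rule surj_f_inv_f[OF sH])
        have "?H' (x * a + ?H x * c) = x * b + ?H x * d" using mA' by blast
        hence "?H' (inverse c * y * c) = x * b" using ad hx by simp
        moreover have "inverse c * y * c = y" using bc(2) by (simp add: field_simps)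
        ultimately have "?H' y = x * b" by simp
        thus "?H' y = b * inv ?H (inverse c * y)" unfolding x_def by (simp add: mult.commute)
      qed
      thus ?thesis using bc by (intro exI[of _ b] exI[of _ "inverse c"]) simp
    qed
  qed
qed

end
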